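(* Let $G=(V,E)$ be a graph with at least one edge, clique number $\omega$ and clique distance $\sigma$. Let $\mathcal{C}^*$ be a clique cover of $G$ minimizing $\|\mathcal{C}^*\|$ among all clique covers of $G$, and let $\mathcal{C}$ be any family produced by the $\sigma$-succinct construction on $G$. Then $$\|\mathcal{C}\|\le \min\{\omega-1,\ 2\sigma-1\}\cdot\|\mathcal{C}^*\|.$$
   Context: All graphs are finite, simple, undirected, with no isolated vertices; $n=|V|$, $m=|E|$; $N(v)$ open neighbourhood, $N[v]=N(v)\cup\{v\}$. A clique is a vertex set inducing a complete subgraph; $\omega$ is the maximum clique size. Clique distance $\sigma:=\binom{n}{2}-m+1$. $\|\mathcal{F}\|:=\sum_{F\in\mathcal{F}}|F|$. A clique cover of $G$ is an indexed family of cliques of $G$ such that every edge lies in at least one member. First-fit greedy coloring of the complement: fix an ordering $v_1,\dots,v_n$ of $V$; process the vertices in this order and give $v_i$ the smallest positive integer $k$ such that every previously processed vertex of colour $k$ is adjacent to $v_i$ in $G$. Let $F_1,\dots,F_p$ be the colour classes. For $v\in F_k$ let $T_v:=\{\ell<k: F_\ell\cap N(v)\neq\emptyset\}$. The $\sigma$-succinct construction maintains a family $\mathcal{C}$; an edge is uncovered if it is not contained in any current member of $\mathcal{C}$. To extend a member $C$ means: while there is an uncovered edge $\{x,y\}$ with $C\subseteq N[x]\cap N[y]$, replace $C$ (inside $\mathcal{C}$) by $C\cup\{x,y\}$. Step 1: $\mathcal{C}:=\{F_\ell:|F_\ell|\ge2\}$; in an arbitrary fixed order extend each member. Step 2: in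 an arbitrary fixed order of the pairs $(v,\ell)$ with $\ell\in T_v$, let $U:=\{u\in F_\ell\cap N(v):\{u,v\}\text{ uncovered}\}$; if $U\ne\emptyset$, add $C_{v,\ell}:=U\cup\{v\}$ to $\mathcal{C}$ and extend it. The output is the final $\mathcal{C}$ (any choices allowed). *)

theory Defs
  imports Main
begin

definition graph :: "'a set \<Rightarrow> 'a set set \<Rightarrow> bool" where
  "graph V E \<longleftrightarrow> finite V \<and> (\<forall>e\<in>E. e \<subseteq> V \<and> card e = 2) \<and> (\<forall>v\<in>V. \<exists>e\<in>E. v \<in> e)"

definition nbhd :: "'a set set \<Rightarrow> 'a \<Rightarrow> 'a set" where
  "nbhd E v = {u. {u, v} \<in> E}"

definition cnbhd :: "'a set set \<Rightarrow> 'a \<Rightarrow> 'a set" where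
  "cnbhd E v = insert v (nbhd E v)"

definition is_clique :: "'a set \<Rightarrow> 'a set set \<Rightarrow> 'a set \<Rightarrow> bool" where
  "is_clique V E K \<longleftrightarrow> K \<subseteq> V \<and> (\<forall>x\<in>K. \<forall>y\<in>K. x \<noteq> y \<longrightarrow> {x, y} \<in> E)"

definition clique_number :: "'a set \<Rightarrow> 'a set set \<Rightarrow> nat" where
  "clique_number V E = Max {card K | K. is_clique V E K}"

definition clique_distance :: "'a set \<Rightarrow> 'a set set \<Rightarrow> nat" where
  "clique_distance V E = (card V choose 2) - card E + 1"

text \<open>Clique covers are indexed families, represented as lists of vertex sets.\<close>

definition is_clique_cover :: "'a set \<Rightarrow> 'a set set \<Rightarrow> 'a set list \<Rightarrow> bool" where
  "is_clique_cover V E Cs \<longleftrightarrow>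
     (\<forall>C\<in>set Cs. is_clique V E C) \<and> (\<forall>e\<in>E. \<exists>C\<in>set Cs. e \<subseteq> C)"

definition fam_size :: "'a set list \<Rightarrow> nat" where
  "fam_size Cs = sum_list (map card Cs)"

text \<open>First-fit greedy colouring of the complement along the ordering vs:
  vertex vs!i gets the least k \<ge> 1 such that every earlier vertex of colour k is adjacent to it.\<close>

definition first_fit :: "'a set set \<Rightarrow> 'a list \<Rightarrow> ('a \<Rightarrow> nat) \<Rightarrow> bool" where
  "first_fit E vs col \<longleftrightarrow>
     (\<forall>i<length vs. col (vs ! i) =
        (LEAST k. k \<ge> 1 \<and> (\<forall>j<i. col (vs ! j) = k \<longrightarrow> {vs ! j, vs ! i} \<in> E)))"

definition colour_class :: "'a set \<Rightarrow> ('a \<Rightarrow> nat) \<Rightarrow> nat \<Rightarrow> 'a set" where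
  "colour_class V col l = {v \<in> V. col v = l}"

definition Tset :: "'a set \<Rightarrow> 'a set set \<Rightarrow> ('a \<Rightarrow> nat) \<Rightarrow> 'a \<Rightarrow> nat set" where
  "Tset V E col v = {l. l < col v \<and> colour_class V col l \<inter> nbhd E v \<noteq> {}}"

definition uncovered :: "'a set list \<Rightarrow> 'a set \<Rightarrow> bool" where
  "uncovered Cs e \<longleftrightarrow> \<not> (\<exists>C\<in>set Cs. e \<subseteq> C)"

definition ext_step :: "'a set set \<Rightarrow> nat \<Rightarrow> 'a set list \<Rightarrow> 'a set list \<Rightarrow> bool" where
  "ext_step E i Cs Cs' \<longleftrightarrow> i < length Cs \<and>
     (\<exists>x y. {x, y} \<in> E \<and> uncovered Cs {x, y} \<and> Cs ! i \<subseteq> cnbhd E x \<inter> cnbhd E y \<and>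
            Cs' = Cs[i := Cs ! i \<union> {x, y}])"

definition extend :: "'a set set \<Rightarrow> nat \<Rightarrow> 'a set list \<Rightarrow> 'a set list \<Rightarrow> bool" where
  "extend E i Cs Cs' \<longleftrightarrow> (ext_step E i)\<^sup>*\<^sup>* Cs Cs' \<and> \<not> (\<exists>Cs''. ext_step E i Cs' Cs'')"

inductive ext_seq :: "'a set set \<Rightarrow> nat list \<Rightarrow> 'a set list \<Rightarrow> 'a set list \<Rightarrow> bool" where
  "ext_seq E [] Cs Cs"
| "extend E i Cs Cs1 \<Longrightarrow> ext_seq E is Cs1 Cs2 \<Longrightarrow> ext_seq E (i # is) Cs Cs2"

inductive step2 :: "'a set \<Rightarrow> 'a set set \<Rightarrow> ('a \<Rightarrow> nat) \<Rightarrow> ('a \<times> nat) list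
                     \<Rightarrow> 'a set list \<Rightarrow> 'a set list \<Rightarrow> bool" where
  "step2 V E col [] Cs Cs"
| "{u \<in> colour_class V col l \<inter> nbhd E v. uncovered Cs {u, v}} = {} \<Longrightarrow>
   step2 V E col ps Cs Cs' \<Longrightarrow> step2 V E col ((v, l) # ps) Cs Cs'"
| "U = {u \<in> colour_class V col l \<inter> nbhd E v. uncovered Cs {u, v}} \<Longrightarrow> U \<noteq> {} \<Longrightarrow>
   extend E (length Cs) (Cs @ [U \<union> {v}]) Cs1 \<Longrightarrow>
   step2 V E col ps Cs1 Cs' \<Longrightarrow> step2 V E col ((v, l) # ps) Cs Cs'"

text \<open>Cs is a possible output of the sigma-succinct construction (any ordering of V,
  any order of the step-1 members, any order of the pairs, any extension choices).\<close>

definition succinct_output :: "'a set \<Rightarrow> 'a set set \<Rightarrow> 'a set list \<Rightarrow> bool" where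
  "succinct_output V E Cs \<longleftrightarrow>
     (\<exists>vs col Cs0 Cs1 ps.
        distinct vs \<and> set vs = V \<and> first_fit E vs col \<and>
        distinct Cs0 \<and>
        set Cs0 = {F. \<exists>l. F = colour_class V col l \<and> card F \<ge> 2} \<and>
        ext_seq E [0..<length Cs0] Cs0 Cs1 \<and>
        distinct ps \<and> set ps = {(v, l). v \<in> V \<and> l \<in> Tset V E col v} \<and>
        step2 V E col ps Cs1 Cs)"

end

theory Submission
  imports Defs
begin

definition cov :: "'a set set \<Rightarrow> 'a set list \<Rightarrow> 'a set set" where
  "cov E Cs = {e\<in>E. \<exists>C\<in>set Cs. e \<subseteq> C}"

definition pairs :: "'a set \<Rightarrow> 'a set set" where
  "pairs F = {e. e \<subseteq> F \<and> card e = 2}"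

lemma graph_finE: "graph V E \<Longrightarrow> finite E"
  unfolding graph_def by (meson PowI finite_Pow_iff rev_finite_subset subsetI)

lemma graph_EV: "graph V E \<Longrightarrow> e \<in> E \<Longrightarrow> e \<subseteq> V"
  unfolding graph_def by auto

lemma graph_E2: "graph V E \<Longrightarrow> e \<in> E \<Longrightarrow> card e = 2"
  unfolding graph_def by auto

lemma sum_set_le_list: "sum f (set xs) \<le> sum_list (map f xs)" for f :: "'b \<Rightarrow> nat"
  by (induction xs) (auto simp: sum.insert_if)

lemma fam_le_len: "(\<forall>C\<in>set Cs. card C \<le> n) \<Longrightarrow> fam_size Cs \<le> length Cs * n"
  unfolding fam_size_def by (induction Cs) auto

lemma two_choose: "2 * (k choose 2) = k * (k - 1)"
proof -
  have "even (k*(k-1))" by (cases k) auto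
  then show ?thesis by (simp add: choose_two)
qed

lemma ext_step_inv:
  assumes g: "graph V E" and st: "ext_step E i Cs Cs'"
    and sub: "\<forall>C\<in>set Cs. C\<subseteq>V" and fs: "fam_size Cs \<le> 2*card(cov E Cs)"
  shows "(\<forall>C\<in>set Cs'. C\<subseteq>V) \<and> fam_size Cs' \<le> 2*card(cov E Cs') \<and> length Cs' = length Cs"
proof -
  obtain x y where xy: "{x, y} \<in> E" "uncovered Cs {x, y}" and i: "i < length Cs"
    and Cs': "Cs' = Cs[i := Cs ! i \<union> {x, y}]"
    using st unfolding ext_step_def by blast
  have xyV: "{x,y} \<subseteq> V" using g xy(1) by (rule graph_EV)
  have "Cs ! i \<subseteq> V" using sub i by auto
  have s1: "\<forall>C\<in>set Cs'. C\<subseteq>V" unfolding Cs' using sub xyV \<open>Cs ! i \<subseteq> V\<close>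
    by (metis Un_subset_iff insert_iff set_update_subset_insert subset_iff)
  have "fam_size Cs' = fam_size Cs + card (Cs ! i \<union> {x, y}) - card (Cs ! i)"
    unfolding fam_size_def Cs' using i by (simp add: map_update sum_list_update)
  moreover have "card (Cs ! i \<union> {x, y}) \<le> card (Cs ! i) + 2"
  proof -
    have "card {x,y} \<le> 2" by (simp add: card_insert_if)
    then show ?thesis using card_Un_le[of "Cs ! i" "{x,y}"] by linarith
  qed
  ultimately have f1: "fam_size Cs' \<le> fam_size Cs + 2" by linarith
  have covsub: "insert {x,y} (cov E Cs) \<subseteq> cov E Cs'"
  proof
    fix e assume "e \<in> insert {x,y} (cov E Cs)"
    then show "e \<in> cov E Cs'"
    proof
      assume "e = {x,y}" then show ?thesis unfolding cov_def Cs' using xy i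
        by (auto intro!: bexI[of _ "Cs ! i \<union> {x, y}"] simp: set_update_memI)
    next
      assume "e \<in> cov E Cs"
      then obtain j where "j < length Cs" "e \<subseteq> Cs ! j" "e \<in> E" unfolding cov_def
        by (auto simp: in_set_conv_nth)
      moreover have "Cs' ! j \<in> set Cs'" using \<open>j < length Cs\<close> Cs' by auto
      moreover have "Cs ! j \<subseteq> Cs' ! j" using \<open>j < length Cs\<close> Cs' by (cases "i = j") auto
      ultimately show ?thesis unfolding cov_def by blast
    qed
  qed
  have "{x,y} \<notin> cov E Cs" using xy(2) unfolding cov_def uncovered_def by auto
  moreover have "finite (cov E Cs')" using graph_finE[OF g] unfolding cov_def by auto
  ultimately have "card (cov E Cs) + 1 \<le> card (cov E Cs')"
    using covsub by (metis Suc_eq_plus1 card_insert_disjoint card_mono finite_subset insert_subset)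
  then show ?thesis using s1 f1 fs Cs' by auto
qed

definition INV :: "'a set \<Rightarrow> 'a set set \<Rightarrow> 'a set list \<Rightarrow> bool" where
  "INV V E Cs \<longleftrightarrow> (\<forall>C\<in>set Cs. C\<subseteq>V) \<and> fam_size Cs \<le> 2*card(cov E Cs)"

lemma extend_inv:
  assumes g: "graph V E" and ex: "extend E i Cs Cs'" and inv: "INV V E Cs"
  shows "INV V E Cs' \<and> length Cs' = length Cs"
proof -
  have "(ext_step E i)\<^sup>*\<^sup>* Cs Cs'" using ex unfolding extend_def by blast
  then show ?thesis
  proof (induction rule: rtranclp_induct)
    case base then show ?case using inv by simp
  next
    case (step y z) then show ?case using ext_step_inv[OF g, of i y z] unfolding INV_def by auto
  qed
qed

lemma ext_seq_inv:
  shows "ext_seq E is Cs Cs' \<Longrightarrow> graph V E \<Longrightarrow> INV V E Cs \<Longrightarrow> INV V E Cs' \<and> length Cs' = length Cs"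
proof (induction rule: ext_seq.induct)
  case (1 E Cs) then show ?case by simp
next
  case (2 E i Cs Cs1 "is" Cs2)
  have "INV V E Cs1 \<and> length Cs1 = length Cs" using extend_inv[OF "2.prems"(1) "2.hyps"(1) "2.prems"(2)] .
  then show ?case using "2.IH" "2.prems" by simp
qed
lemma append_inv:
  assumes g: "graph V E" and inv: "INV V E Cs"
    and U: "U = {u \<in> colour_class V col l \<inter> nbhd E v. uncovered Cs {u, v}}" and Une: "U \<noteq> {}"
  shows "INV V E (Cs @ [U \<union> {v}])"
proof -
  have UE: "\<And>u. u \<in> U \<Longrightarrow> {u,v} \<in> E" using U unfolding nbhd_def by auto
  obtain u0 where u0: "u0 \<in> U" using Une by auto
  have vV: "v \<in> V" using graph_EV[OF g UE[OF u0]] by auto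
  have UV: "U \<subseteq> V" using U unfolding colour_class_def by auto
  have finU: "finite U" using UV g unfolding graph_def by (meson finite_subset)
  have s1: "\<forall>C\<in>set (Cs @ [U \<union> {v}]). C\<subseteq>V" using inv UV vV unfolding INV_def by auto
  have f1: "fam_size (Cs @ [U \<union> {v}]) \<le> fam_size Cs + card U + 1"
    unfolding fam_size_def using card_Un_le[of U "{v}"] by simp
  define I where "I = (\<lambda>u. {u,v}) ` U"
  have cI: "card I = card U" unfolding I_def
    by (rule card_image) (auto simp: inj_on_def doubleton_eq_iff)
  have dis: "I \<inter> cov E Cs = {}" unfolding I_def cov_def using U unfolding uncovered_def by auto
  have sub: "I \<union> cov E Cs \<subseteq> cov E (Cs @ [U \<union> {v}])"
    unfolding I_def cov_def using UE by auto
  have finc: "finite (cov E (Cs @ [U \<union> {v}]))" using graph_finE[OF g] unfolding cov_def by auto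
  have "card (I \<union> cov E Cs) = card U + card (cov E Cs)"
  proof -
    have "finite I" "finite (cov E Cs)" using finc sub finite_subset by blast+
    then show ?thesis using card_Un_disjoint[of I "cov E Cs"] dis cI by simp
  qed
  then have "card U + card (cov E Cs) \<le> card (cov E (Cs @ [U \<union> {v}]))"
    using card_mono[OF finc sub] by simp
  moreover have "1 \<le> card U" using finU Une by (simp add: Suc_leI card_gt_0_iff)
  ultimately show ?thesis using s1 f1 inv unfolding INV_def by linarith
qed

lemma step2_inv:
  shows "step2 V E col ps Cs Cs' \<Longrightarrow> graph V E \<Longrightarrow> INV V E Cs \<Longrightarrow> INV V E Cs' \<and> length Cs' \<le> length Cs + length ps"
proof (induction rule: step2.induct)
  case (1 V E col Cs) then show ?case by simp
next
  case (2 V col l E v Cs ps Cs') then show ?case by simp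
next
  case (3 U V col l E v Cs Cs1 ps Cs')
  have "INV V E (Cs @ [U \<union> {v}])" using append_inv[OF "3.prems"(1,2) "3.hyps"(1,2)] .
  then have "INV V E Cs1 \<and> length Cs1 = Suc (length Cs)" using extend_inv[OF "3.prems"(1) "3.hyps"(3)] by simp
  then show ?case using "3.IH" "3.prems" by simp
qed

lemma ff_exists:
  fixes col :: "'a \<Rightarrow> nat"
  assumes "i < length vs"
  shows "\<exists>k. k \<ge> 1 \<and> (\<forall>j<i. col (vs ! j) = k \<longrightarrow> {vs ! j, vs ! i} \<in> E)"
proof -
  let ?k = "Suc (Max (col ` set vs))"
  have "\<forall>j<i. col (vs ! j) \<noteq> ?k"
  proof (intro allI impI)
    fix j assume "j < i"
    then have "vs ! j \<in> set vs" using assms by auto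
    then have "col (vs ! j) \<le> Max (col ` set vs)" by simp
    then show "col (vs ! j) \<noteq> ?k" by simp
  qed
  then show ?thesis by (intro exI[of _ ?k]) auto
qed

lemma ff_prop:
  assumes "first_fit E vs col" "i < length vs"
  shows "col (vs ! i) \<ge> 1 \<and> (\<forall>j<i. col (vs ! j) = col (vs ! i) \<longrightarrow> {vs ! j, vs ! i} \<in> E)"
proof -
  have eq: "col (vs ! i) = (LEAST k. k \<ge> 1 \<and> (\<forall>j<i. col (vs ! j) = k \<longrightarrow> {vs ! j, vs ! i} \<in> E))"
    using assms unfolding first_fit_def by blast
  show ?thesis unfolding eq[symmetric]
    using LeastI_ex[OF ff_exists[OF assms(2), of col E]] unfolding eq[symmetric] .
qed

lemma ff_witness:
  assumes "first_fit E vs col" "i < length vs" "1 \<le> l" "l < col (vs ! i)"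
  shows "\<exists>j<i. col (vs ! j) = l \<and> {vs ! j, vs ! i} \<notin> E"
proof -
  have eq: "col (vs ! i) = (LEAST k. k \<ge> 1 \<and> (\<forall>j<i. col (vs ! j) = k \<longrightarrow> {vs ! j, vs ! i} \<in> E))"
    using assms unfolding first_fit_def by blast
  have "\<not> (l \<ge> 1 \<and> (\<forall>j<i. col (vs ! j) = l \<longrightarrow> {vs ! j, vs ! i} \<in> E))"
    using not_less_Least[of l] assms(4) unfolding eq by blast
  then show ?thesis using assms(3) by blast
qed

lemma col_ge1:
  assumes "first_fit E vs col" "set vs = V" "v \<in> V"
  shows "col v \<ge> 1"
  using assms ff_prop[OF assms(1)] by (metis in_set_conv_nth)

lemma class_clique:
  assumes ff: "first_fit E vs col" and sv: "set vs = V" and uv: "u \<in> V" "v \<in> V" "col u = col v" "u \<noteq> v"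
  shows "{u, v} \<in> E"
proof -
  obtain i where i: "i < length vs" "vs ! i = v" using uv sv by (metis in_set_conv_nth)
  obtain j where j: "j < length vs" "vs ! j = u" using uv sv by (metis in_set_conv_nth)
  have "i \<noteq> j" using i j uv by auto
  then show ?thesis
  proof (cases "j < i")
    case True then show ?thesis using ff_prop[OF ff i(1)] i j uv by auto
  next
    case False then have "i < j" using \<open>i \<noteq> j\<close> by auto
    then show ?thesis using ff_prop[OF ff j(1)] i j uv by (auto simp: insert_commute)
  qed
qed

definition earlier :: "'a list \<Rightarrow> 'a \<Rightarrow> 'a \<Rightarrow> bool" where
  "earlier vs w v \<longleftrightarrow> (\<exists>j i. j < i \<and> i < length vs \<and> vs ! j = w \<and> vs ! i = v)"

lemma earlier_asym:
  assumes "distinct vs" "earlier vs w v" "earlier vs v w" shows False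
proof -
  obtain j i where a: "j < i" "i < length vs" "vs ! j = w" "vs ! i = v" using assms(2) earlier_def by metis
  obtain j' i' where b: "j' < i'" "i' < length vs" "vs ! j' = v" "vs ! i' = w" using assms(3) earlier_def by metis
  have "i = j'" using a b assms(1) nth_eq_iff_index_eq by (metis order.strict_trans)
  moreover have "j = i'" using a b assms(1) nth_eq_iff_index_eq by (metis order.strict_trans)
  ultimately show False using a b by simp
qed

lemma witness:
  assumes ff: "first_fit E vs col" and sv: "set vs = V" and dv: "distinct vs"
    and v: "v \<in> V" and l: "1 \<le> l" "l < col v"
  shows "\<exists>w. w \<in> V \<and> col w = l \<and> earlier vs w v \<and> {w, v} \<notin> E"
proof -
  obtain i where i: "i < length vs" "vs ! i = v" using v sv by (metis in_set_conv_nth)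
  obtain j where j: "j<i" "col (vs ! j) = l" "{vs ! j, vs ! i} \<notin> E" using ff_witness[OF ff i(1) l(1)] l i by auto
  have "earlier vs (vs!j) v" unfolding earlier_def using j(1) i by blast
  moreover have "vs!j \<in> V" using sv i(1) j(1) by auto
  ultimately show ?thesis using j i by blast
qed

definition NE :: "'a set \<Rightarrow> 'a set set \<Rightarrow> 'a set set" where
  "NE V E = {S. S \<subseteq> V \<and> card S = 2} - E"

lemma card_NE:
  assumes g: "graph V E"
  shows "card (NE V E) = (card V choose 2) - card E" and "card E \<le> card V choose 2"
proof -
  have fV: "finite V" using g unfolding graph_def by auto
  have sub: "E \<subseteq> {S. S \<subseteq> V \<and> card S = 2}" using g unfolding graph_def by auto
  have fin: "finite {S. S \<subseteq> V \<and> card S = 2}" using fV by auto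
  show "card (NE V E) = (card V choose 2) - card E"
    unfolding NE_def using card_Diff_subset[OF finite_subset[OF sub fin] sub] n_subsets[OF fV] by simp
  show "card E \<le> card V choose 2" using card_mono[OF fin sub] n_subsets[OF fV] by simp
qed

definition Pp :: "'a set \<Rightarrow> ('a \<Rightarrow> nat) \<Rightarrow> ('a \<times> nat) set" where
  "Pp V col = {(v, l). v \<in> V \<and> 1 \<le> l \<and> l < col v}"

lemma card_Pp:
  assumes g: "graph V E" and ff: "first_fit E vs col" and sv: "set vs = V" and dv: "distinct vs"
  shows "card (Pp V col) \<le> card (NE V E)"
proof -
  define wit where "wit = (\<lambda>v l. SOME w. w \<in> V \<and> col w = l \<and> earlier vs w v \<and> {w, v} \<notin> E)"
  have W: "wit v l \<in> V \<and> col (wit v l) = l \<and> earlier vs (wit v l) v \<and> {wit v l, v} \<notin> E"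
    if "(v, l) \<in> Pp V col" for v l
    using someI_ex[OF witness[OF ff sv dv, of v l]] that unfolding wit_def Pp_def by auto
  have ne: "w \<noteq> v" if "earlier vs w v" for w v
  proof
    assume "w = v" then show False using that earlier_asym[OF dv, of w v] by simp
  qed
  define h where "h = (\<lambda>(v, l). {wit v l, v})"
  have "h ` Pp V col \<subseteq> NE V E"
  proof
    fix S assume "S \<in> h ` Pp V col"
    then obtain v l where vl: "(v, l) \<in> Pp V col" "S = {wit v l, v}" unfolding h_def by auto
    then have "v \<in> V" unfolding Pp_def by auto
    have w: "wit v l \<in> V" "{wit v l, v} \<notin> E" "wit v l \<noteq> v" using W[OF vl(1)] ne by auto
    then show "S \<in> NE V E" using \<open>v \<in> V\<close> vl(2) unfolding NE_def by simp
  qed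
  moreover have "inj_on h (Pp V col)"
  proof (rule inj_onI)
    fix a b assume a: "a \<in> Pp V col" and b: "b \<in> Pp V col" and eq: "h a = h b"
    obtain v l where av: "a = (v, l)" by (cases a)
    obtain v' l' where bv: "b = (v', l')" by (cases b)
    have e: "{wit v l, v} = {wit v' l', v'}" using eq av bv h_def by simp
    note W1 = W[OF a[unfolded av]] and W2 = W[OF b[unfolded bv]]
    show "a = b"
    proof (cases "v = v'")
      case True
      then have "wit v l = wit v' l'" using e by (auto simp: doubleton_eq_iff)
      then have "l = l'" using W1 W2 by metis
      then show ?thesis using True av bv by simp
    next
      case False
      then have "v = wit v' l'" "v' = wit v l" using e by (auto simp: doubleton_eq_iff)
      then have "earlier vs v v'" "earlier vs v' v" using W1 W2 by simp_all
      then show ?thesis using earlier_asym[OF dv] by blast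
    qed
  qed
  moreover have "finite (NE V E)" using g unfolding NE_def graph_def by auto
  ultimately show ?thesis using card_inj_on_le by blast
qed

lemma card_pairs: "finite F \<Longrightarrow> card (pairs F) = card F choose 2"
  unfolding pairs_def by (rule n_subsets)

lemma clique_le_omega:
  assumes g: "graph V E" and c: "is_clique V E C"
  shows "card C \<le> clique_number V E"
proof -
  have "{card K | K. is_clique V E K} \<subseteq> card ` Pow V" unfolding is_clique_def by auto
  moreover have "finite V" using g unfolding graph_def by auto
  ultimately have "finite {card K | K. is_clique V E K}" by (meson finite_Pow_iff finite_imageI finite_subset)
  then show ?thesis unfolding clique_number_def using c by (auto intro!: Max_ge)
qed

lemma cstar_A:
  assumes g: "graph V E" and cc: "is_clique_cover V E Cstar"
  shows "2 * card E \<le> (clique_number V E - 1) * fam_size Cstar"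
proof -
  have fV: "finite V" using g unfolding graph_def by auto
  have cl: "\<And>C. C \<in> set Cstar \<Longrightarrow> is_clique V E C" using cc unfolding is_clique_cover_def by auto
  have fC: "\<And>C. C \<in> set Cstar \<Longrightarrow> finite C" using cl fV unfolding is_clique_def by (meson finite_subset)
  have "E \<subseteq> (\<Union>C\<in>set Cstar. pairs C)"
    using cc graph_E2[OF g] unfolding is_clique_cover_def pairs_def by blast
  then have "card E \<le> card (\<Union>C\<in>set Cstar. pairs C)"
  proof (rule card_mono[rotated])
    show "finite (\<Union>C\<in>set Cstar. pairs C)"
    proof (intro finite_UN_I)
      fix C assume "C \<in> set Cstar"
      then have "finite (Pow C)" using fC by auto
      then show "finite (pairs C)" by (rule finite_subset[rotated]) (auto simp: pairs_def)
    qed simp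
  qed
  also have "\<dots> \<le> (\<Sum>C\<in>set Cstar. card (pairs C))" by (rule card_UN_le) simp
  also have "\<dots> = (\<Sum>C\<in>set Cstar. card C choose 2)" using card_pairs fC by (auto intro: sum.cong)
  finally have "2 * card E \<le> (\<Sum>C\<in>set Cstar. 2 * (card C choose 2))" by (simp add: sum_distrib_left[symmetric])
  also have "\<dots> = (\<Sum>C\<in>set Cstar. card C * (card C - 1))" by (simp add: two_choose)
  also have "\<dots> \<le> (\<Sum>C\<in>set Cstar. card C * (clique_number V E - 1))"
    by (rule sum_mono) (use clique_le_omega[OF g cl] in \<open>auto intro!: mult_le_mono2 diff_le_mono\<close>)
  also have "\<dots> \<le> sum_list (map (\<lambda>C. card C * (clique_number V E - 1)) Cstar)" by (rule sum_set_le_list)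
  also have "\<dots> = (clique_number V E - 1) * fam_size Cstar"
    unfolding fam_size_def by (induction Cstar) (auto simp: algebra_simps)
  finally show ?thesis .
qed

lemma cstar_B:
  assumes g: "graph V E" and cc: "is_clique_cover V E Cstar"
  shows "card V \<le> fam_size Cstar"
proof -
  have "V \<subseteq> \<Union> (set Cstar)" using cc g unfolding is_clique_cover_def graph_def by blast
  moreover have "finite (\<Union> (set Cstar))"
    using cc g unfolding is_clique_cover_def is_clique_def graph_def by (auto intro: finite_subset)
  ultimately have "card V \<le> card (\<Union> (set Cstar))" by (rule card_mono[rotated])
  also have "\<dots> \<le> sum card (set Cstar)" by (rule card_Union_le_sum_card)
  also have "\<dots> \<le> fam_size Cstar" unfolding fam_size_def by (rule sum_set_le_list)
  finally show ?thesis .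
qed

lemma init_inv:
  assumes g: "graph V E" and ff: "first_fit E vs col" and sv: "set vs = V"
    and d0: "distinct Cs0"
    and s0: "set Cs0 = {F. \<exists>l. F = colour_class V col l \<and> card F \<ge> 2}"
  shows "INV V E Cs0"
proof -
  have fV: "finite V" using g unfolding graph_def by auto
  have sub: "\<And>F. F \<in> set Cs0 \<Longrightarrow> F \<subseteq> V" using s0 unfolding colour_class_def by auto
  have fF: "\<And>F. F \<in> set Cs0 \<Longrightarrow> finite F" using sub fV finite_subset by blast
  have fP: "\<And>F. F \<in> set Cs0 \<Longrightarrow> finite (pairs F)"
  proof -
    fix F assume "F \<in> set Cs0"
    then have "finite (Pow F)" using fF by auto
    then show "finite (pairs F)" by (rule finite_subset[rotated]) (auto simp: pairs_def)
  qed
  have pE: "pairs F \<subseteq> E" if F: "F \<in> set Cs0" for F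
  proof
    fix e assume "e \<in> pairs F"
    then have e: "e \<subseteq> F" "card e = 2" unfolding pairs_def by auto
    then obtain a b where ab: "e = {a, b}" "a \<noteq> b" by (meson card_2_iff)
    obtain l where l: "F = colour_class V col l" using s0 F by auto
    have "a \<in> V" "b \<in> V" "col a = col b" using e ab l unfolding colour_class_def by auto
    then show "e \<in> E" using class_clique[OF ff sv] ab by blast
  qed
  have covs: "(\<Union>F\<in>set Cs0. pairs F) \<subseteq> cov E Cs0"
    using pE unfolding cov_def pairs_def by blast
  have disj: "pairs F \<inter> pairs F' = {}" if FF: "F \<in> set Cs0" "F' \<in> set Cs0" "F \<noteq> F'" for F F'
  proof -
    obtain l where "F = colour_class V col l" using s0 FF(1) by auto
    moreover obtain l' where "F' = colour_class V col l'" using s0 FF(2) by auto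
    ultimately have "F \<inter> F' = {}" using FF(3) unfolding colour_class_def by auto
    then show ?thesis unfolding pairs_def by (auto simp: card_2_iff)
  qed
  have "fam_size Cs0 = (\<Sum>F\<in>set Cs0. card F)" unfolding fam_size_def by (rule sum_list_distinct_conv_sum_set[OF d0])
  also have "\<dots> \<le> (\<Sum>F\<in>set Cs0. 2 * (card F choose 2))"
  proof (rule sum_mono)
    fix F assume "F \<in> set Cs0"
    then have "card F \<ge> 2" using s0 by auto
    then show "card F \<le> 2 * (card F choose 2)" unfolding two_choose
      by (cases "card F") auto
  qed
  also have "\<dots> = 2 * (\<Sum>F\<in>set Cs0. card (pairs F))" unfolding sum_distrib_left by (rule sum.cong) (simp_all add: card_pairs fF)
  also have "(\<Sum>F\<in>set Cs0. card (pairs F)) = card (\<Union>F\<in>set Cs0. pairs F)"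
    by (rule card_UN_disjoint[symmetric]) (use fP disj in auto)
  also have "\<dots> \<le> card (cov E Cs0)"
    by (rule card_mono[OF _ covs]) (use graph_finE[OF g] in \<open>auto simp: cov_def\<close>)
  finally show ?thesis using sub unfolding INV_def by auto
qed

theorem mainTheorem6:
  fixes V :: "'a set" and E :: "'a set set" and Cstar Cs :: "'a set list"
  assumes "graph V E"
    and "E \<noteq> {}"
    and "is_clique_cover V E Cstar"
    and "\<forall>Cs'. is_clique_cover V E Cs' \<longrightarrow> fam_size Cstar \<le> fam_size Cs'"
    and "succinct_output V E Cs"
  shows "fam_size Cs \<le>
           min (clique_number V E - 1) (2 * clique_distance V E - 1) * fam_size Cstar"
proof -
  note g = assms(1)
  obtain vs col Cs0 Cs1 ps where sv: "distinct vs" "set vs = V" and ff: "first_fit E vs col"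
    and d0: "distinct Cs0" and s0: "set Cs0 = {F. \<exists>l. F = colour_class V col l \<and> card F \<ge> 2}"
    and es: "ext_seq E [0..<length Cs0] Cs0 Cs1"
    and dp: "distinct ps" and sp: "set ps = {(v, l). v \<in> V \<and> l \<in> Tset V E col v}"
    and s2: "step2 V E col ps Cs1 Cs"
    using assms(5) unfolding succinct_output_def by (elim exE conjE) (rule that; assumption)
  have fV: "finite V" using g unfolding graph_def by auto
  have inv0: "INV V E Cs0" by (rule init_inv[OF g ff sv(2) d0 s0])
  have inv1: "INV V E Cs1 \<and> length Cs1 = length Cs0" by (rule ext_seq_inv[OF es g inv0])
  have inv: "INV V E Cs \<and> length Cs \<le> length Cs1 + length ps" by (rule step2_inv[OF s2 g]) (use inv1 in simp)
  define q where "q = card (NE V E)"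
  have finPp: "finite (Pp V col)"
  proof (rule finite_subset)
    show "Pp V col \<subseteq> Sigma V (\<lambda>v. {..<col v})" unfolding Pp_def by auto
    show "finite (Sigma V (\<lambda>v. {..<col v}))" using fV by auto
  qed
  have Ppq: "card (Pp V col) \<le> q" unfolding q_def by (rule card_Pp[OF g ff sv(2) sv(1)])
  have lps: "length ps \<le> q"
  proof -
    have "set ps \<subseteq> Pp V col"
    proof
      fix p assume "p \<in> set ps"
      then obtain v l where p: "p = (v, l)" "v \<in> V" "l \<in> Tset V E col v" using sp by auto
      then obtain u where "u \<in> V" "col u = l" "l < col v" unfolding Tset_def colour_class_def by auto
      then have "1 \<le> l" using col_ge1[OF ff sv(2)] by auto
      then show "p \<in> Pp V col" using p \<open>l < col v\<close> unfolding Pp_def by auto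
    qed
    then have "card (set ps) \<le> card (Pp V col)" by (rule card_mono[OF finPp])
    then show ?thesis using distinct_card[OF dp] Ppq by simp
  qed
  have l0: "length Cs0 \<le> q + 1"
  proof -
    obtain e where "e \<in> E" using assms(2) by auto
    moreover have "card e = 2" using graph_E2[OF g \<open>e \<in> E\<close>] .
    then have "e \<noteq> {}" by auto
    ultimately have "V \<noteq> {}" using graph_EV[OF g \<open>e \<in> E\<close>] by blast
    then have fin: "finite (col ` V)" "col ` V \<noteq> {}" using fV by auto
    obtain vm where vm: "vm \<in> V" "col vm = Max (col ` V)" using Max_in[OF fin] by auto
    have "set Cs0 \<subseteq> (colour_class V col) ` (col ` V)"
    proof
      fix F assume "F \<in> set Cs0"
      then obtain l where l: "F = colour_class V col l" "card F \<ge> 2" using s0 by auto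
      then have "F \<noteq> {}" by auto
      then obtain u where "u \<in> V" "col u = l" using l unfolding colour_class_def by auto
      then show "F \<in> (colour_class V col) ` (col ` V)" using l by auto
    qed
    then have "card (set Cs0) \<le> card ((colour_class V col) ` (col ` V))"
      using card_mono finite_imageI[OF fin(1)] by blast
    also have "\<dots> \<le> card (col ` V)" by (rule card_image_le[OF fin(1)])
    also have "\<dots> \<le> card {1..col vm}"
    proof (rule card_mono)
      show "col ` V \<subseteq> {1..col vm}" using col_ge1[OF ff sv(2)] vm fin by auto
    qed simp
    also have "\<dots> = (col vm - 1) + 1" using col_ge1[OF ff sv(2) vm(1)] by simp
    also have "col vm - 1 = card ({vm} \<times> {1..<col vm})" by simp
    also have "\<dots> \<le> card (Pp V col)"
      by (rule card_mono[OF finPp]) (use vm(1) in \<open>auto simp: Pp_def\<close>)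
    finally show ?thesis using distinct_card[OF d0] Ppq by simp
  qed
  have lCs: "length Cs \<le> 2 * q + 1" using inv inv1 lps l0 by simp
  have sig: "2 * clique_distance V E - 1 = 2 * q + 1"
    unfolding clique_distance_def q_def using card_NE[OF g] by simp
  have B: "fam_size Cs \<le> (2 * clique_distance V E - 1) * fam_size Cstar"
  proof -
    have "fam_size Cs \<le> length Cs * card V"
    proof (rule fam_le_len, intro ballI)
      fix C assume "C \<in> set Cs"
      then have "C \<subseteq> V" using inv unfolding INV_def by blast
      then show "card C \<le> card V" by (rule card_mono[OF fV])
    qed
    also have "\<dots> \<le> (2 * q + 1) * fam_size Cstar"
      by (rule mult_le_mono[OF lCs cstar_B[OF g assms(3)]])
    finally show ?thesis unfolding sig .
  qed
  have A: "fam_size Cs \<le> (clique_number V E - 1) * fam_size Cstar"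
  proof -
    have "fam_size Cs \<le> 2 * card (cov E Cs)" using inv unfolding INV_def by simp
    also have "\<dots> \<le> 2 * card E"
    proof -
      have "cov E Cs \<subseteq> E" unfolding cov_def by auto
      then show ?thesis using card_mono[OF graph_finE[OF g]] by simp
    qed
    also have "\<dots> \<le> (clique_number V E - 1) * fam_size Cstar" by (rule cstar_A[OF g assms(3)])
    finally show ?thesis .
  qed
  show ?thesis using A B by (simp add: min_def)
qed

end
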